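(* Let $P=(X,\prec)$ be a finite twin-free poset that is a unit OC interval order. Then $P$ contains none of the following six posets as an induced subposet: $\mathbf{4}+\mathbf{1}$, $\mathbf{3}+\mathbf{1}+\mathbf{1}$, $Z$, $D$, $Y$, and the dual of $Y$.
   Context: Posets $P=(X,\prec)$ are strict (irreflexive) partial orders; $x\parallel y$ means $x,y$ are incomparable. An induced subposet is a subset of $X$ with the restricted order. Two points are twins if they have exactly the same comparabilities (same set of elements below and same set of elements above); $P$ is twin-free if it has no two distinct twins. An OC interval representation of $P$ assigns to each $x\in X$ a real interval $I(x)$ that is either open or closed, such that $x\prec y$ if and only if every point of $I(x)$ is less than every point of $I(y)$. $P$ is a unit OC interval order if it has an OC interval representation in which all intervals have the same length. The posets (all pairs not listed as comparable, nor implied by transitivity, are incomparable): $\mathbf{4}+\mathbf{1}$ has elements $a,b,c,d,x$ with $a\prec b\prec c\prec d$ and $x$ incomparable to all. $\mathbf{3}+\mathbf{1}+\mathbf{1}$ has elements $a,b,c,x,y$ with $a\prec b\prec c$ and $x,y$ incomparable to everything. $Z$ has elements $a,b,c,d,x,y$ with $a\prec b\prec c\prec d$, $x\prec d$, $a\prec y$. $D$ has elements $a,b,c,d,x$ with $a\prec b\prec d$, $a\prec c\prec d$. $Y$ has elements $a,b,c,d,x$ with $a\prec d\prec b$ and $a\prec d\prec c$. The dual of a poset is obtained by reversing all comparabilities. *)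

theory Defs
  imports Complex_Main
begin

definition strict_poset :: "'a set \<Rightarrow> ('a \<Rightarrow> 'a \<Rightarrow> bool) \<Rightarrow> bool" where
  "strict_poset X lt \<longleftrightarrow>
     (\<forall>x\<in>X. \<not> lt x x) \<and>
     (\<forall>x\<in>X. \<forall>y\<in>X. \<forall>z\<in>X. lt x y \<longrightarrow> lt y z \<longrightarrow> lt x z)"

definition twins :: "'a set \<Rightarrow> ('a \<Rightarrow> 'a \<Rightarrow> bool) \<Rightarrow> 'a \<Rightarrow> 'a \<Rightarrow> bool" where
  "twins X lt x y \<longleftrightarrow> (\<forall>z\<in>X. (lt z x \<longleftrightarrow> lt z y) \<and> (lt x z \<longleftrightarrow> lt y z))"

definition twin_free :: "'a set \<Rightarrow> ('a \<Rightarrow> 'a \<Rightarrow> bool) \<Rightarrow> bool" where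
  "twin_free X lt \<longleftrightarrow> (\<forall>x\<in>X. \<forall>y\<in>X. x \<noteq> y \<longrightarrow> \<not> twins X lt x y)"

text \<open>An OC interval is encoded as (left endpoint, right endpoint, closed?).
  A closed interval [l,r] requires l \<le> r; an open interval (l,r) requires l < r
  (so that intervals are nonempty).\<close>

type_synonym ocint = "real \<times> real \<times> bool"

definition valid_ocint :: "ocint \<Rightarrow> bool" where
  "valid_ocint I = (case I of (l, r, cl) \<Rightarrow> if cl then l \<le> r else l < r)"

definition ocint_set :: "ocint \<Rightarrow> real set" where
  "ocint_set I = (case I of (l, r, cl) \<Rightarrow> if cl then {l..r} else {l<..<r})"

definition ocint_length :: "ocint \<Rightarrow> real" where
  "ocint_length I = (case I of (l, r, _) \<Rightarrow> r - l)"

definition OC_representation :: "'a set \<Rightarrow> ('a \<Rightarrow> 'a \<Rightarrow> bool) \<Rightarrow> ('a \<Rightarrow> ocint) \<Rightarrow> bool" where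
  "OC_representation X lt I \<longleftrightarrow>
     (\<forall>x\<in>X. valid_ocint (I x)) \<and>
     (\<forall>x\<in>X. \<forall>y\<in>X. lt x y \<longleftrightarrow> (\<forall>p\<in>ocint_set (I x). \<forall>q\<in>ocint_set (I y). p < q))"

definition unit_OC_interval_order :: "'a set \<Rightarrow> ('a \<Rightarrow> 'a \<Rightarrow> bool) \<Rightarrow> bool" where
  "unit_OC_interval_order X lt \<longleftrightarrow>
     (\<exists>I L. OC_representation X lt I \<and> (\<forall>x\<in>X. ocint_length (I x) = L))"

definition contains_induced :: "'a set \<Rightarrow> ('a \<Rightarrow> 'a \<Rightarrow> bool) \<Rightarrow> 'b set \<Rightarrow> ('b \<Rightarrow> 'b \<Rightarrow> bool) \<Rightarrow> bool" where
  "contains_induced X ltP Y ltQ \<longleftrightarrow>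
     (\<exists>f. inj_on f Y \<and> f ` Y \<subseteq> X \<and> (\<forall>u\<in>Y. \<forall>v\<in>Y. ltQ u v \<longleftrightarrow> ltP (f u) (f v)))"

datatype pt = pa | pb | pc | pd | px | py

definition four_plus_one_set :: "pt set" where "four_plus_one_set = {pa, pb, pc, pd, px}"
definition four_plus_one :: "pt \<Rightarrow> pt \<Rightarrow> bool" where
  "four_plus_one u v \<longleftrightarrow> (u, v) \<in> {(pa,pb),(pa,pc),(pa,pd),(pb,pc),(pb,pd),(pc,pd)}"

definition three_one_one_set :: "pt set" where "three_one_one_set = {pa, pb, pc, px, py}"
definition three_one_one :: "pt \<Rightarrow> pt \<Rightarrow> bool" where
  "three_one_one u v \<longleftrightarrow> (u, v) \<in> {(pa,pb),(pa,pc),(pb,pc)}"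

definition Z_set :: "pt set" where "Z_set = {pa, pb, pc, pd, px, py}"
definition Z_rel :: "pt \<Rightarrow> pt \<Rightarrow> bool" where
  "Z_rel u v \<longleftrightarrow> (u, v) \<in> {(pa,pb),(pa,pc),(pa,pd),(pb,pc),(pb,pd),(pc,pd),(px,pd),(pa,py)}"

definition D_set :: "pt set" where "D_set = {pa, pb, pc, pd, px}"
definition D_rel :: "pt \<Rightarrow> pt \<Rightarrow> bool" where
  "D_rel u v \<longleftrightarrow> (u, v) \<in> {(pa,pb),(pa,pc),(pa,pd),(pb,pd),(pc,pd)}"

definition Y_set :: "pt set" where "Y_set = {pa, pb, pc, pd, px}"
definition Y_rel :: "pt \<Rightarrow> pt \<Rightarrow> bool" where
  "Y_rel u v \<longleftrightarrow> (u, v) \<in> {(pa,pd),(pa,pb),(pa,pc),(pd,pb),(pd,pc)}"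

definition Y_dual_rel :: "pt \<Rightarrow> pt \<Rightarrow> bool" where
  "Y_dual_rel u v \<longleftrightarrow> Y_rel v u"

end

theory Submission imports Defs begin

definition before :: "real \<Rightarrow> bool \<Rightarrow> real \<Rightarrow> bool \<Rightarrow> real \<Rightarrow> bool" where
  "before l1 c1 l2 c2 L \<longleftrightarrow> l1 + L < l2 \<or> (l1 + L = l2 \<and> (\<not> c1 \<or> \<not> c2))"

lemma key:
  assumes v1: "valid_ocint (l1, r1, c1)" and v2: "valid_ocint (l2, r2, c2)"
  shows "(\<forall>p\<in>ocint_set (l1, r1, c1). \<forall>q\<in>ocint_set (l2, r2, c2). p < q)
         \<longleftrightarrow> (r1 < l2 \<or> (r1 = l2 \<and> (\<not> c1 \<or> \<not> c2)))"
proof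
  assume R: "r1 < l2 \<or> (r1 = l2 \<and> (\<not> c1 \<or> \<not> c2))"
  show "\<forall>p\<in>ocint_set (l1, r1, c1). \<forall>q\<in>ocint_set (l2, r2, c2). p < q"
    using R by (cases c1; cases c2; auto simp: ocint_set_def)
next
  assume A: "\<forall>p\<in>ocint_set (l1, r1, c1). \<forall>q\<in>ocint_set (l2, r2, c2). p < q"
  show "r1 < l2 \<or> (r1 = l2 \<and> (\<not> c1 \<or> \<not> c2))"
  proof (rule ccontr)
    assume N: "\<not> (r1 < l2 \<or> (r1 = l2 \<and> (\<not> c1 \<or> \<not> c2)))"
    define p where "p = (if c1 then r1 else (max l1 l2 + r1)/2)"
    have hp: "p \<in> ocint_set (l1, r1, c1)" "p \<ge> l2" "l2 < p \<or> (c1 \<and> c2 \<and> p = l2)"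
      using v1 N by (auto simp: p_def ocint_set_def valid_ocint_def split: if_splits)
    define q where "q = (if c2 then l2 else (l2 + min r2 p)/2)"
    have hq: "q \<in> ocint_set (l2, r2, c2)" "q \<le> p"
      using v2 hp(2,3) by (auto simp: q_def ocint_set_def valid_ocint_def split: if_splits)
    show False using A hp(1) hq by force
  qed
qed

lemma reduce:
  assumes rep: "OC_representation X lt I" and len: "\<forall>x\<in>X. ocint_length (I x) = L"
    and tf: "twin_free X lt" and inj: "inj_on f S" and sub: "f ` S \<subseteq> X"
    and pres: "\<forall>u\<in>S. \<forall>v\<in>S. R u v \<longleftrightarrow> lt (f u) (f v)"
  shows "\<forall>u\<in>S. \<forall>v\<in>S. R u v \<longleftrightarrow> before (fst (I (f u))) (snd (snd (I (f u)))) (fst (I (f v))) (snd (snd (I (f v)))) L"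
    and "\<forall>u\<in>S. (if snd (snd (I (f u))) then 0 \<le> L else 0 < L)"
    and "\<forall>u\<in>S. \<forall>v\<in>S. u \<noteq> v \<longrightarrow> fst (I (f u)) \<noteq> fst (I (f v)) \<or> snd (snd (I (f u))) \<noteq> snd (snd (I (f v)))"
proof -
  have shape: "I x = (fst (I x), fst (I x) + L, snd (snd (I x)))" if "x \<in> X" for x
    using len that by (cases "I x") (auto simp: ocint_length_def)
  have valid: "valid_ocint (I x)" if "x \<in> X" for x using rep that by (simp add: OC_representation_def)
  have ltiff: "lt x y \<longleftrightarrow> before (fst (I x)) (snd (snd (I x))) (fst (I y)) (snd (snd (I y))) L"
    if "x \<in> X" "y \<in> X" for x y
  proof -
    have "lt x y \<longleftrightarrow> (\<forall>p\<in>ocint_set (I x). \<forall>q\<in>ocint_set (I y). p < q)"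
      using rep that by (simp add: OC_representation_def)
    also have "\<dots> \<longleftrightarrow> before (fst (I x)) (snd (snd (I x))) (fst (I y)) (snd (snd (I y))) L"
      using key[of "fst (I x)" "fst (I x) + L" "snd (snd (I x))" "fst (I y)" "fst (I y) + L" "snd (snd (I y))"]
        shape[OF that(1)] shape[OF that(2)] valid[OF that(1)] valid[OF that(2)]
      by (simp add: before_def)
    finally show ?thesis .
  qed
  show "\<forall>u\<in>S. \<forall>v\<in>S. R u v \<longleftrightarrow> before (fst (I (f u))) (snd (snd (I (f u)))) (fst (I (f v))) (snd (snd (I (f v)))) L"
  proof (intro ballI)
    fix u v assume uv: "u \<in> S" "v \<in> S"
    hence "f u \<in> X" "f v \<in> X" using sub by auto
    thus "R u v \<longleftrightarrow> before (fst (I (f u))) (snd (snd (I (f u)))) (fst (I (f v))) (snd (snd (I (f v)))) L"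
      using pres uv ltiff by simp
  qed
  show "\<forall>u\<in>S. (if snd (snd (I (f u))) then 0 \<le> L else 0 < L)"
  proof
    fix u assume "u \<in> S"
    hence "f u \<in> X" using sub by auto
    thus "(if snd (snd (I (f u))) then 0 \<le> L else 0 < L)"
      using valid[of "f u"] shape[of "f u"] by (cases "I (f u)") (auto simp: valid_ocint_def)
  qed
  show "\<forall>u\<in>S. \<forall>v\<in>S. u \<noteq> v \<longrightarrow> fst (I (f u)) \<noteq> fst (I (f v)) \<or> snd (snd (I (f u))) \<noteq> snd (snd (I (f v)))"
  proof (intro ballI impI, rule ccontr)
    fix u v assume uv: "u \<in> S" "v \<in> S" "u \<noteq> v"
      and eq: "\<not> (fst (I (f u)) \<noteq> fst (I (f v)) \<or> snd (snd (I (f u))) \<noteq> snd (snd (I (f v))))"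
    have X: "f u \<in> X" "f v \<in> X" using sub uv by auto
    have ne: "f u \<noteq> f v" using inj uv by (meson inj_on_def)
    have "twins X lt (f u) (f v)" unfolding twins_def
      using ltiff X eq by auto
    thus False using tf X ne by (auto simp: twin_free_def)
  qed
qed


lemma ar0:
  fixes lo :: "pt \<Rightarrow> real"
  assumes "\<forall>u\<in>four_plus_one_set. \<forall>v\<in>four_plus_one_set. four_plus_one u v \<longleftrightarrow> before (lo u) (cl u) (lo v) (cl v) L"
    and "\<forall>u\<in>four_plus_one_set. (if cl u then 0 \<le> L else 0 < L)"
    and "\<forall>u\<in>four_plus_one_set. \<forall>v\<in>four_plus_one_set. u \<noteq> v \<longrightarrow> lo u \<noteq> lo v \<or> cl u \<noteq> cl v"
  shows False
  using assms unfolding four_plus_one_set_def four_plus_one_def before_def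
  by simp (smt (verit))

lemma ar1:
  fixes lo :: "pt \<Rightarrow> real"
  assumes "\<forall>u\<in>three_one_one_set. \<forall>v\<in>three_one_one_set. three_one_one u v \<longleftrightarrow> before (lo u) (cl u) (lo v) (cl v) L"
    and "\<forall>u\<in>three_one_one_set. (if cl u then 0 \<le> L else 0 < L)"
    and "\<forall>u\<in>three_one_one_set. \<forall>v\<in>three_one_one_set. u \<noteq> v \<longrightarrow> lo u \<noteq> lo v \<or> cl u \<noteq> cl v"
  shows False
  using assms unfolding three_one_one_set_def three_one_one_def before_def
  by simp (smt (verit))

lemma ar2:
  fixes lo :: "pt \<Rightarrow> real"
  assumes "\<forall>u\<in>Z_set. \<forall>v\<in>Z_set. Z_rel u v \<longleftrightarrow> before (lo u) (cl u) (lo v) (cl v) L"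
    and "\<forall>u\<in>Z_set. (if cl u then 0 \<le> L else 0 < L)"
    and "\<forall>u\<in>Z_set. \<forall>v\<in>Z_set. u \<noteq> v \<longrightarrow> lo u \<noteq> lo v \<or> cl u \<noteq> cl v"
  shows False
  using assms unfolding Z_set_def Z_rel_def before_def
  by simp (smt (verit))

lemma ar3:
  fixes lo :: "pt \<Rightarrow> real"
  assumes "\<forall>u\<in>D_set. \<forall>v\<in>D_set. D_rel u v \<longleftrightarrow> before (lo u) (cl u) (lo v) (cl v) L"
    and "\<forall>u\<in>D_set. (if cl u then 0 \<le> L else 0 < L)"
    and "\<forall>u\<in>D_set. \<forall>v\<in>D_set. u \<noteq> v \<longrightarrow> lo u \<noteq> lo v \<or> cl u \<noteq> cl v"
  shows False
  using assms unfolding D_set_def D_rel_def before_def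
  by simp (smt (verit))

lemma ar4:
  fixes lo :: "pt \<Rightarrow> real"
  assumes "\<forall>u\<in>Y_set. \<forall>v\<in>Y_set. Y_rel u v \<longleftrightarrow> before (lo u) (cl u) (lo v) (cl v) L"
    and "\<forall>u\<in>Y_set. (if cl u then 0 \<le> L else 0 < L)"
    and "\<forall>u\<in>Y_set. \<forall>v\<in>Y_set. u \<noteq> v \<longrightarrow> lo u \<noteq> lo v \<or> cl u \<noteq> cl v"
  shows False
  using assms unfolding Y_set_def Y_rel_def before_def
  by simp (smt (verit))

lemma ar5:
  fixes lo :: "pt \<Rightarrow> real"
  assumes "\<forall>u\<in>Y_set. \<forall>v\<in>Y_set. Y_dual_rel u v \<longleftrightarrow> before (lo u) (cl u) (lo v) (cl v) L"
    and "\<forall>u\<in>Y_set. (if cl u then 0 \<le> L else 0 < L)"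
    and "\<forall>u\<in>Y_set. \<forall>v\<in>Y_set. u \<noteq> v \<longrightarrow> lo u \<noteq> lo v \<or> cl u \<noteq> cl v"
  shows False
  using assms unfolding Y_set_def Y_dual_rel_def Y_rel_def before_def
  by simp (smt (verit))

lemma gen:
  assumes rep: "OC_representation X lt I" and len: "\<forall>x\<in>X. ocint_length (I x) = L"
    and tf: "twin_free X lt"
    and ar: "\<And>(lo :: 'b \<Rightarrow> real) cl. \<lbrakk>\<forall>u\<in>S. \<forall>v\<in>S. R u v \<longleftrightarrow> before (lo u) (cl u) (lo v) (cl v) L;
       \<forall>u\<in>S. (if cl u then 0 \<le> L else 0 < L);
       \<forall>u\<in>S. \<forall>v\<in>S. u \<noteq> v \<longrightarrow> lo u \<noteq> lo v \<or> cl u \<noteq> cl v\<rbrakk> \<Longrightarrow> False"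
  shows "\<not> contains_induced X lt S R"
proof
  assume "contains_induced X lt S R"
  then obtain f where f: "inj_on f S" "f ` S \<subseteq> X" "\<forall>u\<in>S. \<forall>v\<in>S. R u v \<longleftrightarrow> lt (f u) (f v)"
    unfolding contains_induced_def by blast
  note r = reduce[OF rep len tf f]
  show False
    by (rule ar[of "\<lambda>u. fst (I (f u))" "\<lambda>u. snd (snd (I (f u)))", OF r])
qed

theorem proposition5:
  fixes X :: "'a set" and lt :: "'a \<Rightarrow> 'a \<Rightarrow> bool"
  assumes "finite X"
    and "strict_poset X lt"
    and "twin_free X lt"
    and "unit_OC_interval_order X lt"
  shows "\<not> contains_induced X lt four_plus_one_set four_plus_one
       \<and> \<not> contains_induced X lt three_one_one_set three_one_one
       \<and> \<not> contains_induced X lt Z_set Z_rel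
       \<and> \<not> contains_induced X lt D_set D_rel
       \<and> \<not> contains_induced X lt Y_set Y_rel
       \<and> \<not> contains_induced X lt Y_set Y_dual_rel"
proof -
  obtain I L where rep: "OC_representation X lt I" and len: "\<forall>x\<in>X. ocint_length (I x) = L"
    using assms(4) unfolding unit_OC_interval_order_def by blast
  note g = gen[OF rep len assms(3)]
  have 1: "\<not> contains_induced X lt four_plus_one_set four_plus_one" by (rule g, rule ar0)
  have 2: "\<not> contains_induced X lt three_one_one_set three_one_one" by (rule g, rule ar1)
  have 3: "\<not> contains_induced X lt Z_set Z_rel" by (rule g, rule ar2)
  have 4: "\<not> contains_induced X lt D_set D_rel" by (rule g, rule ar3)
  have 5: "\<not> contains_induced X lt Y_set Y_rel" by (rule g, rule ar4)
  have 6: "\<not> contains_induced X lt Y_set Y_dual_rel" by (rule g, rule ar5)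
  show ?thesis using 1 2 3 4 5 6 by blast
qed

end
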